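(* For every instance (strip $T=[0,w]\times[0,h]$ with $1<w\le 2$, $h>1$, and reals $\frac12\le y_1<\dots<y_n\le h-\frac12$), there is a staircase layout with positive gap.
   Context: A layout is a pair $(\mathbf x,\prec)$ where $\mathbf x=(x_1,\dots,x_n)$ with $x_i\in[\frac12,w-\frac12]$, and $\prec$ is a total order (stacking order) on the squares $s_1,\dots,s_n$, where $s_i$ is the closed axis-parallel unit square with centre $(x_i,y_i)$. If $s_i\prec s_j$ we say $s_j$ is in front of $s_i$ and $s_i$ is behind $s_j$. A point $p$ on the boundary of $s_i$ is visible if every square $s_j$ ($j\neq i$) containing $p$ is behind $s_i$. The visible perimeter of $s_i$ is the total length of its visible boundary points; the gap of $s_i$ is its visible perimeter minus $2$, and the gap of a layout is the minimum of the gaps of its squares. A staircase is a layout in which $x_1\le x_2\le\dots\le x_n$ or $x_1\ge x_2\ge\dots\ge x_n$, and in which $s_1\prec s_2\prec\dots\prec s_n$ or $s_1\succ s_2\succ\dots\succ s_n$. *)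

theory Defs
  imports "HOL-Analysis.Analysis"
begin

text \<open>Squares are indexed by 1..n. x, y :: nat => real give the centres.
  A stacking order is a strict relation prec on indices: prec i j means s_i is behind s_j.\<close>

definition unit_sq :: "real \<Rightarrow> real \<Rightarrow> (real \<times> real) set" where
  "unit_sq a b = {p. \<bar>fst p - a\<bar> \<le> 1/2 \<and> \<bar>snd p - b\<bar> \<le> 1/2}"

definition is_stacking_order :: "nat \<Rightarrow> (nat \<Rightarrow> nat \<Rightarrow> bool) \<Rightarrow> bool" where
  "is_stacking_order n prec \<longleftrightarrow>
     (\<forall>i\<in>{1..n}. \<not> prec i i) \<and>
     (\<forall>i\<in>{1..n}. \<forall>j\<in>{1..n}. \<forall>k\<in>{1..n}. prec i j \<longrightarrow> prec j k \<longrightarrow> prec i k) \<and>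
     (\<forall>i\<in>{1..n}. \<forall>j\<in>{1..n}. i \<noteq> j \<longrightarrow> prec i j \<or> prec j i)"

definition is_layout :: "real \<Rightarrow> nat \<Rightarrow> (nat \<Rightarrow> real) \<Rightarrow> (nat \<Rightarrow> nat \<Rightarrow> bool) \<Rightarrow> bool" where
  "is_layout w n x prec \<longleftrightarrow>
     (\<forall>i\<in>{1..n}. 1/2 \<le> x i \<and> x i \<le> w - 1/2) \<and> is_stacking_order n prec"

definition visible_pt ::
  "nat \<Rightarrow> (nat \<Rightarrow> real) \<Rightarrow> (nat \<Rightarrow> real) \<Rightarrow> (nat \<Rightarrow> nat \<Rightarrow> bool) \<Rightarrow> nat \<Rightarrow> real \<times> real \<Rightarrow> bool" where
  "visible_pt n x y prec i p \<longleftrightarrow>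
     (\<forall>j\<in>{1..n}. j \<noteq> i \<and> p \<in> unit_sq (x j) (y j) \<longrightarrow> prec j i)"

definition sides :: "real \<Rightarrow> real \<Rightarrow> (real \<Rightarrow> real \<times> real) list" where
  "sides a b = [ (\<lambda>t. (a - 1/2 + t, b - 1/2)), (\<lambda>t. (a - 1/2 + t, b + 1/2)),
                 (\<lambda>t. (a - 1/2, b - 1/2 + t)), (\<lambda>t. (a + 1/2, b - 1/2 + t)) ]"

definition visible_perimeter ::
  "nat \<Rightarrow> (nat \<Rightarrow> real) \<Rightarrow> (nat \<Rightarrow> real) \<Rightarrow> (nat \<Rightarrow> nat \<Rightarrow> bool) \<Rightarrow> nat \<Rightarrow> real" where
  "visible_perimeter n x y prec i =
     (\<Sum>\<gamma>\<leftarrow>sides (x i) (y i). measure lebesgue {t\<in>{0..1}. visible_pt n x y prec i (\<gamma> t)})"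

definition sq_gap ::
  "nat \<Rightarrow> (nat \<Rightarrow> real) \<Rightarrow> (nat \<Rightarrow> real) \<Rightarrow> (nat \<Rightarrow> nat \<Rightarrow> bool) \<Rightarrow> nat \<Rightarrow> real" where
  "sq_gap n x y prec i = visible_perimeter n x y prec i - 2"

definition layout_gap ::
  "nat \<Rightarrow> (nat \<Rightarrow> real) \<Rightarrow> (nat \<Rightarrow> real) \<Rightarrow> (nat \<Rightarrow> nat \<Rightarrow> bool) \<Rightarrow> real" where
  "layout_gap n x y prec = Min (sq_gap n x y prec ` {1..n})"

definition staircase :: "nat \<Rightarrow> (nat \<Rightarrow> real) \<Rightarrow> (nat \<Rightarrow> nat \<Rightarrow> bool) \<Rightarrow> bool" where
  "staircase n x prec \<longleftrightarrow>
     ((\<forall>i\<in>{1..n}. \<forall>j\<in>{1..n}. i \<le> j \<longrightarrow> x i \<le> x j) \<or>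
      (\<forall>i\<in>{1..n}. \<forall>j\<in>{1..n}. i \<le> j \<longrightarrow> x i \<ge> x j)) \<and>
     ((\<forall>i\<in>{1..n}. \<forall>j\<in>{1..n}. prec i j \<longleftrightarrow> i < j) \<or>
      (\<forall>i\<in>{1..n}. \<forall>j\<in>{1..n}. prec i j \<longleftrightarrow> j < i))"

end

theory Submission
  imports Defs
begin

lemma unit_sq_closed: "closed (unit_sq a b)"
proof -
  have "unit_sq a b = {a-1/2..a+1/2} \<times> {b-1/2..b+1/2}"
    unfolding unit_sq_def by (auto simp: abs_if split: if_splits)
  thus ?thesis by (simp add: closed_Times)
qed

lemma vis_meas:
  fixes f :: "real \<Rightarrow> real \<times> real"
  assumes f: "f \<in> borel_measurable borel"
  shows "{t\<in>{0..1}. visible_pt n x y prec i (f t)} \<in> sets lebesgue"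
proof -
  have A: "{t\<in>space borel. \<forall>j\<in>{1..n}. j \<noteq> i \<and> f t \<in> unit_sq (x j) (y j) \<longrightarrow> prec j i} \<in> sets borel"
  proof (rule sets.sets_Collect_finite_All)
    fix j assume "j \<in> {1..n}"
    show "{t\<in>space borel. j \<noteq> i \<and> f t \<in> unit_sq (x j) (y j) \<longrightarrow> prec j i} \<in> sets borel"
    proof (cases "j \<noteq> i \<and> \<not> prec j i")
      case True
      have "f -` unit_sq (x j) (y j) \<inter> space borel \<in> sets borel"
        by (rule measurable_sets[OF f]) (simp add: borel_closed unit_sq_closed)
      hence B: "space borel - (f -` unit_sq (x j) (y j) \<inter> space borel) \<in> sets borel"
        by (rule sets.Diff[OF sets.top])
      have C: "{t\<in>space borel. j \<noteq> i \<and> f t \<in> unit_sq (x j) (y j) \<longrightarrow> prec j i}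
          = space borel - (f -` unit_sq (x j) (y j) \<inter> space borel)" using True by blast
      show ?thesis unfolding C by (rule B)
    next
      case False
      hence C: "{t\<in>space borel. j \<noteq> i \<and> f t \<in> unit_sq (x j) (y j) \<longrightarrow> prec j i} = space borel" by blast
      show ?thesis unfolding C by (rule sets.top)
    qed
  qed simp
  have D: "{0..1::real} \<in> sets borel" by (simp add: borel_closed)
  have E: "{t\<in>{0..1}. visible_pt n x y prec i (f t)} = {t\<in>space borel. \<forall>j\<in>{1..n}. j \<noteq> i \<and> f t \<in> unit_sq (x j) (y j) \<longrightarrow> prec j i} \<inter> {0..1}"
    unfolding visible_pt_def space_borel by blast
  have "{t\<in>{0..1}. visible_pt n x y prec i (f t)} \<in> sets borel" unfolding E by (rule sets.Int[OF A D])
  thus ?thesis by (metis sets_completionI_sets sets_lborel)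
qed
lemma meas_ge:
  fixes S :: "real set"
  assumes "{0..c} \<subseteq> S" "S \<subseteq> {0..1}" "S \<in> sets lebesgue"
  shows "c \<le> measure lebesgue S"
proof (cases "c \<le> 0")
  case True then show ?thesis by (meson measure_nonneg order_trans)
next
  case False
  have f: "S \<in> fmeasurable lebesgue"
    by (rule fmeasurableI2[of "{0..1}"]) (use assms in auto)
  have "measure lebesgue {0..c} = c" using False by simp
  moreover have "measure lebesgue {0..c} \<le> measure lebesgue S"
    by (rule measure_mono_fmeasurable) (use assms f in auto)
  ultimately show ?thesis by simp
qed

lemma vis_ge:
  fixes f :: "real \<Rightarrow> real \<times> real"
  assumes "f \<in> borel_measurable borel"
    and "\<And>t. 0 \<le> t \<Longrightarrow> t \<le> c \<Longrightarrow> t \<le> 1 \<and> visible_pt n x y prec i (f t)"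
  shows "c \<le> measure lebesgue {t\<in>{0..1}. visible_pt n x y prec i (f t)}"
  by (rule meas_ge) (use assms vis_meas in auto)

theorem lemma1:
  fixes w h :: real and n :: nat and y :: "nat \<Rightarrow> real"
  assumes "1 < w" and "w \<le> 2" and "1 < h" and "1 \<le> n"
    and "\<forall>i\<in>{1..n}. 1/2 \<le> y i \<and> y i \<le> h - 1/2"
    and "\<forall>i\<in>{1..<n}. y i < y (Suc i)"
  shows "\<exists>x prec. is_layout w n x prec \<and> staircase n x prec \<and> layout_gap n x y prec > 0"
proof -
  define x where "x = (\<lambda>i::nat. 1/2 + (w-1) * real (i-1) / real n)"
  define prec where "prec = (\<lambda>i j::nat. i < j)"
  define \<delta> where "\<delta> = (w-1) / real n"
  have npos: "real n > 0" using assms(4) by simp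
  have dpos: "\<delta> > 0" unfolding \<delta>_def using assms(1) npos by simp
  have dle: "\<delta> \<le> 1" unfolding \<delta>_def using assms(1,2,4) npos by (simp add: divide_le_eq)
  have xmono: "x i \<le> x j" if "i \<le> j" for i j
    unfolding x_def using that assms(1) npos
    by (simp add: divide_le_eq_1 divide_right_mono mult_left_mono)
  have xlt: "x j - x i \<ge> \<delta>" if "1 \<le> i" "i < j" for i j
  proof -
    have "real (j-1) - real (i-1) \<ge> 1" using that by linarith
    hence "(w-1) * (real (j-1) - real (i-1)) \<ge> (w-1) * 1"
      using assms(1) by (intro mult_left_mono) auto
    hence "(w-1) * real (j-1) / real n - (w-1) * real (i-1) / real n \<ge> (w-1)/real n"
      using npos by (simp add: divide_right_mono diff_divide_distrib[symmetric] algebra_simps)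
    thus ?thesis unfolding x_def \<delta>_def by simp
  qed
  have ymono: "y i < y j" if "1 \<le> i" "i < j" "j \<le> n" for i j
    using that
  proof (induction j)
    case 0 then show ?case by simp
  next
    case (Suc j)
    have step: "y j < y (Suc j)" using assms(6) Suc.prems by auto
    show ?case
    proof (cases "i = j")
      case True then show ?thesis using step by simp
    next
      case False
      then have "y i < y j" using Suc by simp
      then show ?thesis using step by simp
    qed
  qed
  have xrange: "1/2 \<le> x i \<and> x i \<le> w - 1/2" if "i \<in> {1..n}" for i
  proof -
    have "real (i-1) / real n \<le> 1" using that npos by (simp add: divide_le_eq)
    hence "(w-1) * (real (i-1) / real n) \<le> (w-1) * 1"
      using assms(1) by (intro mult_left_mono) auto
    moreover have "0 \<le> (w-1) * (real (i-1) / real n)" using assms(1) by simp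
    ultimately show ?thesis unfolding x_def by simp
  qed
  have lay: "is_layout w n x prec"
    unfolding is_layout_def is_stacking_order_def prec_def using xrange by auto
  have stair: "staircase n x prec"
    unfolding staircase_def prec_def using xmono by auto
  have gap: "sq_gap n x y prec i > 0" if ii: "i \<in> {1..n}" for i
  proof -
    let ?m = "\<lambda>f. measure lebesgue {t\<in>{0..1}. visible_pt n x y prec i (f t)}"
    have b1: "1 \<le> ?m (\<lambda>t. (x i - 1/2 + t, y i - 1/2))"
    proof (rule vis_ge)
      fix t :: real assume t: "0 \<le> t" "t \<le> 1"
      have "prec j i" if "j \<in> {1..n}" "j \<noteq> i" "(x i - 1/2 + t, y i - 1/2) \<in> unit_sq (x j) (y j)" for j
      proof (rule ccontr)
        assume "\<not> prec j i"
        hence "i < j" using that(2) unfolding prec_def by simp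
        hence "y i < y j" using ymono ii that(1) by auto
        thus False using that(3) unfolding unit_sq_def by auto
      qed
      thus "t \<le> 1 \<and> visible_pt n x y prec i (x i - 1/2 + t, y i - 1/2)"
        unfolding visible_pt_def using t by auto
    qed measurable
    have b3: "1 \<le> ?m (\<lambda>t. (x i - 1/2, y i - 1/2 + t))"
    proof (rule vis_ge)
      fix t :: real assume t: "0 \<le> t" "t \<le> 1"
      have "prec j i" if "j \<in> {1..n}" "j \<noteq> i" "(x i - 1/2, y i - 1/2 + t) \<in> unit_sq (x j) (y j)" for j
      proof (rule ccontr)
        assume "\<not> prec j i"
        hence "i < j" using that(2) unfolding prec_def by simp
        hence "x j - x i \<ge> \<delta>" using xlt ii by auto
        thus False using that(3) dpos unfolding unit_sq_def by auto
      qed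
      thus "t \<le> 1 \<and> visible_pt n x y prec i (x i - 1/2, y i - 1/2 + t)"
        unfolding visible_pt_def using t by auto
    qed measurable
    have b2: "\<delta>/2 \<le> ?m (\<lambda>t. (x i - 1/2 + t, y i + 1/2))"
    proof (rule vis_ge)
      fix t :: real assume t: "0 \<le> t" "t \<le> \<delta>/2"
      have "prec j i" if "j \<in> {1..n}" "j \<noteq> i" "(x i - 1/2 + t, y i + 1/2) \<in> unit_sq (x j) (y j)" for j
      proof (rule ccontr)
        assume "\<not> prec j i"
        hence "i < j" using that(2) unfolding prec_def by simp
        hence "x j - x i \<ge> \<delta>" using xlt ii by auto
        thus False using that(3) dpos t unfolding unit_sq_def by auto
      qed
      thus "t \<le> 1 \<and> visible_pt n x y prec i (x i - 1/2 + t, y i + 1/2)"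
        unfolding visible_pt_def using t dle by auto
    qed measurable
    have b4: "0 \<le> ?m (\<lambda>t. (x i + 1/2, y i - 1/2 + t))" by simp
    have "visible_perimeter n x y prec i = ?m (\<lambda>t. (x i - 1/2 + t, y i - 1/2)) + (?m (\<lambda>t. (x i - 1/2 + t, y i + 1/2))
          + (?m (\<lambda>t. (x i - 1/2, y i - 1/2 + t)) + ?m (\<lambda>t. (x i + 1/2, y i - 1/2 + t))))"
      unfolding visible_perimeter_def sides_def by simp
    thus ?thesis unfolding sq_gap_def using b1 b2 b3 b4 dpos by linarith
  qed
  have "layout_gap n x y prec > 0"
    unfolding layout_gap_def using gap assms(4) by (subst Min_gr_iff) auto
  thus ?thesis using lay stair by blast
qed

end
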